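(* For every $[\rho]\in\mathcal{P}_5$ and every $t\in\mathbb{R}$, one has $\Phi^t_{a_1}([\rho])\in\mathcal{P}_5$ and $\Phi^t_{[a_1,b_1]}([\rho])\in\mathcal{P}_5$.
   Context: $S$ closed oriented genus 2, $\pi_1S=\langle a_1,b_1,a_2,b_2 : [a_1,b_1][a_2,b_2]=1\rangle$, $\Gamma=\langle q_1,\dots,q_6: q_i^2=1, q_1\cdots q_6=1\rangle\supset\pi_1S$ via $a_1\mapsto q_3q_2$, $b_1\mapsto q_1q_2$, $a_2\mapsto q_6q_5$, $b_2\mapsto q_4q_5$. $\mathcal{P}_5\subset\chi(S,\mathrm{PSL}_2(\mathbb{R}))$ is the set of conjugacy classes of restrictions to $\pi_1S$ of representations $\bar\rho\colon\Gamma\to\mathrm{PSL}_2(\mathbb{R})$ whose kernel contains $q_5$ and no other $q_i$; for such $\rho$, $\rho(a_1),\rho(b_1),\rho([a_1,b_1])$ are hyperbolic and $\rho(a_2),\rho(b_2)$ are elliptic of angle $\pi$. Let $U$ be the open set of classes with Euler number $\pm1$ for which $\rho(a_1)$ and $\rho([a_1,b_1])$ are hyperbolic; for $x\in\{a_1,[a_1,b_1]\}$, $\ell_x\colon U\to\mathbb{R}_{>0}$ is the translation length of $\rho(x)$ and $\Phi^t_x$ its Hamiltonian flow for the Goldman symplectic form. Concretely, writing $\xi_\rho(t)$, $\zeta_\rho(t)$ for the one-parameter groups of hyperbolic elements with the same axes as $\rho(a_1)$, resp. $\rho([a_1,b_1])$, translating by $t$ (so $\rho(a_1)=\xi_\rho(\ell_{a_1})$,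 $\rho([a_1,b_1])=\zeta_\rho(\ell_{[a_1,b_1]})$), $\Phi^t_{a_1}$ lifts to $a_1\mapsto\rho(a_1)$, $b_1\mapsto\rho(b_1)\xi_\rho(t)^{-1}$, $a_2\mapsto\rho(a_2)$, $b_2\mapsto\rho(b_2)$, and $\Phi^t_{[a_1,b_1]}$ lifts to $a_1\mapsto\rho(a_1)$, $b_1\mapsto\rho(b_1)$, $a_2\mapsto\zeta_\rho(t)\rho(a_2)\zeta_\rho(t)^{-1}$, $b_2\mapsto\zeta_\rho(t)\rho(b_2)\zeta_\rho(t)^{-1}$. *)

theory Defs
  imports "HOL-Analysis.Analysis"
begin

text \<open>Elements of PSL(2,R) are represented by lifts in SL(2,R) (real 2x2 matrices
of determinant 1); two lifts represent the same element of PSL(2,R) iff they agree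
up to sign.\<close>

type_synonym mat2 = "real^2^2"

definition psl_eq :: "mat2 \<Rightarrow> mat2 \<Rightarrow> bool" where
  "psl_eq A B \<longleftrightarrow> A = B \<or> A = - B"

definition comm :: "mat2 \<Rightarrow> mat2 \<Rightarrow> mat2" where
  "comm A B = A ** B ** matrix_inv A ** matrix_inv B"

definition hyperbolic :: "mat2 \<Rightarrow> bool" where
  "hyperbolic A \<longleftrightarrow> det A = 1 \<and> \<bar>trace A\<bar> > 2"

definition transl_len :: "mat2 \<Rightarrow> real" where
  "transl_len A = 2 * arcosh (\<bar>trace A\<bar> / 2)"

definition diag2 :: "real \<Rightarrow> real \<Rightarrow> mat2" where
  "diag2 a b = (\<chi> i j. if i = j then (if i = 1 then a else b) else 0)"

text \<open>The one-parameter group of hyperbolic elements with the same axis (and the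
same translation direction) as the hyperbolic element A, translating by t; it
satisfies one_par A (transl_len A) = A in PSL(2,R).  It is well defined since the
diagonalising matrix P is unique up to right multiplication by diagonal matrices.\<close>
definition one_par :: "mat2 \<Rightarrow> real \<Rightarrow> mat2" where
  "one_par A t = (SOME M. \<exists>P. invertible P \<and>
      psl_eq (P ** diag2 (exp (transl_len A / 2)) (exp (- transl_len A / 2)) ** matrix_inv P) A \<and>
      M = P ** diag2 (exp (t / 2)) (exp (- t / 2)) ** matrix_inv P)"

datatype gen = a1 | b1 | a2 | b2

text \<open>A representation pi_1 S \<rightarrow> PSL(2,R), given by SL(2,R)-lifts of the images of
the generators satisfying [a1,b1][a2,b2] = 1 in PSL(2,R).\<close>
definition surface_rep :: "(gen \<Rightarrow> mat2) \<Rightarrow> bool" where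
  "surface_rep \<rho> \<longleftrightarrow> (\<forall>g. det (\<rho> g) = 1) \<and>
     psl_eq (comm (\<rho> a1) (\<rho> b1) ** comm (\<rho> a2) (\<rho> b2)) (mat 1)"

text \<open>A representation Gamma \<rightarrow> PSL(2,R), given by SL(2,R)-lifts Q 1, ..., Q 6 of the
images of q_1, ..., q_6 (values at other indices are irrelevant).\<close>
definition orbifold_rep :: "(nat \<Rightarrow> mat2) \<Rightarrow> bool" where
  "orbifold_rep Q \<longleftrightarrow> (\<forall>i\<in>{1..6}. det (Q i) = 1 \<and> psl_eq (Q i ** Q i) (mat 1)) \<and>
     psl_eq (Q 1 ** Q 2 ** Q 3 ** Q 4 ** Q 5 ** Q 6) (mat 1)"

definition restrict_rep :: "(nat \<Rightarrow> mat2) \<Rightarrow> gen \<Rightarrow> mat2" where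
  "restrict_rep Q g = (case g of
      a1 \<Rightarrow> Q 3 ** Q 2 | b1 \<Rightarrow> Q 1 ** Q 2 | a2 \<Rightarrow> Q 6 ** Q 5 | b2 \<Rightarrow> Q 4 ** Q 5)"

definition conj_equiv :: "(gen \<Rightarrow> mat2) \<Rightarrow> (gen \<Rightarrow> mat2) \<Rightarrow> bool" where
  "conj_equiv \<rho> \<sigma> \<longleftrightarrow> (\<exists>C. det C = 1 \<and> (\<forall>g. psl_eq (C ** \<rho> g ** matrix_inv C) (\<sigma> g)))"

definition in_P5 :: "(gen \<Rightarrow> mat2) \<Rightarrow> bool" where
  "in_P5 \<rho> \<longleftrightarrow> surface_rep \<rho> \<and>
     (\<exists>Q. orbifold_rep Q \<and> psl_eq (Q 5) (mat 1) \<and>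
          (\<forall>i\<in>{1..6}. i \<noteq> 5 \<longrightarrow> \<not> psl_eq (Q i) (mat 1)) \<and>
          conj_equiv (restrict_rep Q) \<rho>)"

text \<open>Lifts of the Hamiltonian flows of l_{a1} and l_{[a1,b1]}.\<close>
definition flow_a1 :: "real \<Rightarrow> (gen \<Rightarrow> mat2) \<Rightarrow> gen \<Rightarrow> mat2" where
  "flow_a1 t \<rho> = \<rho>(b1 := \<rho> b1 ** matrix_inv (one_par (\<rho> a1) t))"

definition flow_comm :: "real \<Rightarrow> (gen \<Rightarrow> mat2) \<Rightarrow> gen \<Rightarrow> mat2" where
  "flow_comm t \<rho> = (let Z = one_par (comm (\<rho> a1) (\<rho> b1)) t in
     \<rho>(a2 := Z ** \<rho> a2 ** matrix_inv Z, b2 := Z ** \<rho> b2 ** matrix_inv Z))"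

end

theory Submission
  imports Defs
begin

definition m2 :: "real \<Rightarrow> real \<Rightarrow> real \<Rightarrow> real \<Rightarrow> mat2" where
  "m2 a b c d = (\<chi> i j. if i = 1 then (if j = 1 then a else b) else (if j = 1 then c else d))"

lemma m2_eta: "A = m2 (A$1$1) (A$1$2) (A$2$1) (A$2$2)"
  by (simp add: vec_eq_iff m2_def forall_2)

lemma m2_mult[simp]: "m2 a b c d ** m2 e f g h = m2 (a*e+b*g) (a*f+b*h) (c*e+d*g) (c*f+d*h)"
  by (simp add: m2_def matrix_matrix_mult_def vec_eq_iff forall_2 sum_2)

lemma m2_eq[simp]: "m2 a b c d = m2 e f g h \<longleftrightarrow> a=e \<and> b=f \<and> c=g \<and> d=h"
  by (simp add: m2_def vec_eq_iff forall_2)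

lemma m2_one: "mat 1 = m2 1 0 0 1"
  by (simp add: m2_def mat_def vec_eq_iff forall_2)

lemma m2_neg[simp]: "- m2 a b c d = m2 (-a) (-b) (-c) (-d)"
  by (simp add: m2_def vec_eq_iff forall_2)

lemma m2_add[simp]: "m2 a b c d + m2 e f g h = m2 (a+e) (b+f) (c+g) (d+h)"
  by (simp add: m2_def vec_eq_iff forall_2)

lemma m2_scaleR[simp]: "k *\<^sub>R m2 a b c d = m2 (k*a) (k*b) (k*c) (k*d)"
  by (simp add: m2_def vec_eq_iff forall_2)

lemma m2_det[simp]: "det (m2 a b c d) = a*d - b*c"
  by (simp add: det_2 m2_def)

lemma m2_trace[simp]: "trace (m2 a b c d) = a + d"
  by (simp add: trace_def sum_2 m2_def)

lemma diag2_m2: "diag2 a b = m2 a 0 0 b"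
  by (simp add: diag2_def m2_def vec_eq_iff forall_2)

lemma inv_unique2: assumes "(A::mat2) ** B = mat 1" "B ** A = mat 1" shows "matrix_inv A = B"
proof -
  have ex: "\<exists>A'. A ** A' = mat 1 \<and> A' ** A = mat 1" using assms by blast
  let ?C = "matrix_inv A"
  have C: "A ** ?C = mat 1 \<and> ?C ** A = mat 1"
    unfolding matrix_inv_def by (rule someI_ex[OF ex])
  have "?C = ?C ** (A ** B)" using assms by simp
  also have "\<dots> = (?C ** A) ** B" by (simp add: matrix_mul_assoc)
  also have "\<dots> = B" using C by simp
  finally show ?thesis .
qed

lemma det_mul2: "det ((A::mat2) ** B) = det A * det B"
  by (rule det_mul)

lemma smul_l[simp]: "(k *\<^sub>R (A::mat2)) ** B = k *\<^sub>R (A ** B)"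
  by (simp add: scalar_matrix_assoc)
lemma smul_r[simp]: "(A::mat2) ** (k *\<^sub>R B) = k *\<^sub>R (A ** B)"
  by (metis matrix_scalar_ac scalar_matrix_assoc)
lemma neg_l[simp]: "(- (A::mat2)) ** B = - (A ** B)"
proof -
  have "(- A) ** B = ((-1::real) *\<^sub>R A) ** B" by simp
  then show ?thesis by (simp only: smul_l) simp
qed
lemma neg_r[simp]: "(A::mat2) ** (- B) = - (A ** B)"
proof -
  have "A ** (- B) = A ** ((-1::real) *\<^sub>R B)" by simp
  then show ?thesis by (simp only: smul_r) simp
qed

lemma m2_inv_facts: assumes "a*d - b*c \<noteq> 0"
  shows "m2 a b c d ** ((1/(a*d-b*c)) *\<^sub>R m2 d (-b) (-c) a) = mat 1"
        "((1/(a*d-b*c)) *\<^sub>R m2 d (-b) (-c) a) ** m2 a b c d = mat 1"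
proof -
  have e1: "m2 a b c d ** m2 d (-b) (-c) a = (a*d-b*c) *\<^sub>R mat 1"
    by (simp add: m2_one algebra_simps)
  have e2: "m2 d (-b) (-c) a ** m2 a b c d = (a*d-b*c) *\<^sub>R mat 1"
    by (simp add: m2_one algebra_simps)
  show "m2 a b c d ** ((1/(a*d-b*c)) *\<^sub>R m2 d (-b) (-c) a) = mat 1"
    by (simp only: smul_r e1) (use assms in simp)
  show "((1/(a*d-b*c)) *\<^sub>R m2 d (-b) (-c) a) ** m2 a b c d = mat 1"
    by (simp only: smul_l e2) (use assms in simp)
qed

lemma m2_inv: assumes "a*d - b*c \<noteq> 0"
  shows "matrix_inv (m2 a b c d) = (1/(a*d-b*c)) *\<^sub>R m2 d (-b) (-c) a"
  by (rule inv_unique2[OF m2_inv_facts[OF assms]])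

lemma m2_inv1: assumes "a*d - b*c = 1"
  shows "matrix_inv (m2 a b c d) = m2 d (-b) (-c) a"
  unfolding m2_inv[of a d b c, unfolded assms, simplified] by simp

lemma inv_det_nz: assumes "det (A::mat2) \<noteq> 0"
  shows "A ** matrix_inv A = mat 1" "matrix_inv A ** A = mat 1"
proof -
  obtain a b c d where A: "A = m2 a b c d" using m2_eta by blast
  have nz: "a*d - b*c \<noteq> 0" using assms unfolding A by simp
  show "A ** matrix_inv A = mat 1" "matrix_inv A ** A = mat 1"
    unfolding A m2_inv[OF nz] by (rule m2_inv_facts[OF nz])+
qed

lemma det_inv1: assumes "det (A::mat2) = 1" shows "det (matrix_inv A) = 1"
proof -
  obtain a b c d where A: "A = m2 a b c d" using m2_eta by blast
  have h: "a*d - b*c = 1" using assms unfolding A by simp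
  have "det (m2 d (-b) (-c) a) = a*d - b*c" by (simp add: algebra_simps)
  then show ?thesis unfolding A m2_inv1[OF h] using h by simp
qed

lemma inv1: assumes "det (A::mat2) = 1"
  shows "A ** matrix_inv A = mat 1" "matrix_inv A ** A = mat 1"
  using inv_det_nz assms by auto

lemma trace_smul[simp]: "trace (k *\<^sub>R (A::mat2)) = k * trace A"
proof -
  obtain a b c d where A: "A = m2 a b c d" using m2_eta by blast
  show ?thesis unfolding A by (simp add: algebra_simps)
qed
lemma trace_neg2[simp]: "trace (- (A::mat2)) = - trace A"
proof -
  obtain a b c d where A: "A = m2 a b c d" using m2_eta by blast
  show ?thesis unfolding A by (simp add: algebra_simps)
qed
lemma det_smul_sign: "(e::real)*e = 1 \<Longrightarrow> det (e *\<^sub>R (A::mat2)) = det A"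
proof -
  assume e: "e*e = 1"
  obtain a b c d where A: "A = m2 a b c d" using m2_eta by blast
  have "e*a*(e*d) - e*b*(e*c) = (e*e)*(a*d-b*c)" by (simp add: algebra_simps)
  then show ?thesis unfolding A using e by simp
qed

definition sgn1 :: "real \<Rightarrow> bool" where "sgn1 e \<longleftrightarrow> e = 1 \<or> e = -1"

lemma psl_eq_iff: "psl_eq A B \<longleftrightarrow> (\<exists>e. sgn1 e \<and> A = e *\<^sub>R B)"
  by (auto simp: psl_eq_def sgn1_def)

lemma L1_core:
  fixes a b c x y z :: real
  assumes hQ: "a*a + b*c = -1" and hR: "x*x + y*z = -1"
  shows "\<bar>2*a*x + b*z + c*y\<bar> \<ge> 2 \<and>
    (\<bar>2*a*x + b*z + c*y\<bar> = 2 \<longrightarrow> (x=a \<and> y=b \<and> z=c) \<or> (x=-a \<and> y=-b \<and> z=-c))"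
proof -
  define p where "p = (b - c)/2"
  define q where "q = -(b + c)/2"
  define rr where "rr = (y - z)/2"
  define ss where "ss = -(y + z)/2"
  have b: "b = p - q" and c: "c = -(p+q)" unfolding p_def q_def by (simp_all add: field_simps)
  have y: "y = rr - ss" and z: "z = -(rr+ss)" unfolding rr_def ss_def by (simp_all add: field_simps)
  have hp: "p*p = 1 + a*a + q*q" using hQ unfolding b c by (simp add: algebra_simps)
  have hr: "rr*rr = 1 + x*x + ss* ss" using hR unfolding y z by (simp add: algebra_simps)
  define w where "w = a*x + q* ss"
  have hT: "2*a*x + b*z + c*y = 2*(w - p*rr)" unfolding w_def b c y z by (simp add: algebra_simps)
  have pr2: "(p*rr)*(p*rr) = (p*p)*(rr*rr)" by (simp add: algebra_simps)
  have La: "(p*rr)^2 = (1+w)^2 + (a-x)^2 + (q-ss)^2 + (a* ss-q*x)^2"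
    unfolding power2_eq_square pr2 hp hr w_def by (simp add: algebra_simps)
  have Lb: "(p*rr)^2 = (1-w)^2 + (a+x)^2 + (q+ss)^2 + (a* ss-q*x)^2"
    unfolding power2_eq_square pr2 hp hr w_def by (simp add: algebra_simps)
  have ga: "(1+w)^2 \<le> (p*rr)^2" using La by (simp add: add_nonneg_nonneg)
  have gb: "(1-w)^2 \<le> (p*rr)^2" using Lb by (simp add: add_nonneg_nonneg)
  have aa: "\<bar>1+w\<bar> \<le> \<bar>p*rr\<bar>" using ga abs_le_square_iff by blast
  have ab: "\<bar>1-w\<bar> \<le> \<bar>p*rr\<bar>" using gb abs_le_square_iff by blast
  have main: "\<bar>p*rr\<bar> \<ge> 1 + \<bar>w\<bar>" using aa ab by linarith
  have ge: "\<bar>w - p*rr\<bar> \<ge> 1" using main by linarith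
  show ?thesis
  proof
    show "\<bar>2*a*x + b*z + c*y\<bar> \<ge> 2" unfolding hT using ge by simp
  next
    show "\<bar>2*a*x + b*z + c*y\<bar> = 2 \<longrightarrow> (x=a \<and> y=b \<and> z=c) \<or> (x=-a \<and> y=-b \<and> z=-c)"
    proof
      assume "\<bar>2*a*x + b*z + c*y\<bar> = 2"
      then have e1: "\<bar>w - p*rr\<bar> = 1" unfolding hT by simp
      then have e2: "\<bar>p*rr\<bar> = 1 + \<bar>w\<bar>" using main by linarith
      show "(x=a \<and> y=b \<and> z=c) \<or> (x=-a \<and> y=-b \<and> z=-c)"
      proof (cases "w \<ge> 0")
        case True
        then have "\<bar>p*rr\<bar> = 1 + w" using e2 by simp
        then have "(p*rr)^2 = (1+w)^2" by (metis power2_abs)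
        then have "(a-x)^2 + (q-ss)^2 + (a* ss-q*x)^2 = 0" using La by simp
        then have "(a-x)^2 = 0 \<and> (q-ss)^2 = 0" using zero_le_power2[of "a-x"] zero_le_power2[of "q-ss"] zero_le_power2[of "a* ss-q*x"] by linarith
        then have xa: "x = a" and sq: "ss = q" by simp_all
        then have "rr*rr = p*p" using hp hr by simp
        then have "rr = p \<or> rr = -p" using square_eq_iff by blast
        then show ?thesis
        proof
          assume "rr = p" then show ?thesis using xa sq b c y z by simp
        next
          assume rp: "rr = -p"
          have wv: "w = a*a + q*q" unfolding w_def xa sq by simp
          have prv: "p*rr = -(1 + a*a + q*q)" using hp rp by simp
          have "w - p*rr = 1 + 2*(a*a + q*q)" using wv prv by simp
          then have "\<bar>1 + 2*(a*a + q*q)\<bar> = 1" using e1 by simp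
          moreover have "0 \<le> 1 + 2*(a*a + q*q)" by (simp add: add_nonneg_nonneg)
          ultimately have X: "1 + 2*(a*a + q*q) = 1" by (metis abs_of_nonneg)
          have "a*a + q*q = 0" using X by smt
          then have "a = 0 \<and> q = 0" using sum_squares_eq_zero_iff by blast
          then have "a = 0" "q = 0" by simp_all
          then show ?thesis using xa sq rp b c y z by simp
        qed
      next
        case False
        then have "\<bar>p*rr\<bar> = 1 - w" using e2 by simp
        then have "(p*rr)^2 = (1-w)^2" by (metis power2_abs)
        then have "(a+x)^2 + (q+ss)^2 + (a* ss-q*x)^2 = 0" using Lb by simp
        then have "(a+x)^2 = 0 \<and> (q+ss)^2 = 0" using zero_le_power2[of "a+x"] zero_le_power2[of "q+ss"] zero_le_power2[of "a* ss-q*x"] by linarith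
        then have xa: "x = -a" and sq: "ss = -q" by (simp_all add: add_eq_0_iff)
        then have "rr*rr = p*p" using hp hr by simp
        then have "rr = p \<or> rr = -p" using square_eq_iff by blast
        then show ?thesis
        proof
          assume rp: "rr = -p" then show ?thesis using xa sq b c y z by simp
        next
          assume rp: "rr = p"
          have wv: "w = -(a*a + q*q)" unfolding w_def xa sq by simp
          have prv: "p*rr = (1 + a*a + q*q)" using hp rp by simp
          have "w - p*rr = -(1 + 2*(a*a + q*q))" using wv prv by simp
          then have "\<bar>1 + 2*(a*a + q*q)\<bar> = 1" using e1 by (metis abs_minus_cancel)
          moreover have "0 \<le> 1 + 2*(a*a + q*q)" by (simp add: add_nonneg_nonneg)
          ultimately have X: "1 + 2*(a*a + q*q) = 1" by (metis abs_of_nonneg)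
          have "a*a + q*q = 0" using X by smt
          then have "a = 0 \<and> q = 0" using sum_squares_eq_zero_iff by blast
          then have "a = 0" "q = 0" by simp_all
          then show ?thesis using xa sq rp b c y z by simp
        qed
      qed
    qed
  qed
qed

lemma obtain_m2: obtains a b c d where "(A::mat2) = m2 a b c d"
  using m2_eta by blast

lemma add_l2: "((A::mat2) + B) ** (C::mat2) = A ** C + B ** C"
proof -
  obtain a b c d where A: "A = m2 a b c d" by (rule obtain_m2)
  obtain e f g h where B: "B = m2 e f g h" by (rule obtain_m2)
  obtain i j k l where C: "C = m2 i j k l" by (rule obtain_m2)
  show ?thesis unfolding A B C by (simp add: algebra_simps)
qed

lemma add_r2: "(A::mat2) ** (B + C) = A ** B + A ** C"
  by (rule matrix_add_ldistrib)

lemma sq_trace0: assumes "det (Q::mat2) = 1" "Q ** Q = - mat 1" shows "trace Q = 0"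
proof -
  obtain a b c d where Q: "Q = m2 a b c d" by (rule obtain_m2)
  have e: "a*a+b*c = -1" "a*b+b*d = 0" "c*a+d*c = 0" "c*b+d*d = -1"
    using assms(2) unfolding Q m2_one by simp_all
  have "a + d = 0"
  proof (rule ccontr)
    assume nz: "a + d \<noteq> 0"
    have "b*(a+d) = 0" using e(2) by (simp add: algebra_simps)
    then have "b = 0" using nz by simp
    then have "a*a = -1" using e(1) by simp
    moreover have "a*a \<ge> 0" by simp
    ultimately show False by simp
  qed
  then show ?thesis unfolding Q by simp
qed

lemma half_turns:
  assumes "det (Q::mat2) = 1" "Q ** Q = - mat 1" "det (R::mat2) = 1" "R ** R = - mat 1"
  shows "2 \<le> \<bar>trace (Q ** R)\<bar> \<and> (\<bar>trace (Q ** R)\<bar> = 2 \<longrightarrow> R = Q \<or> R = - Q)"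
proof -
  obtain a b c d where Q: "Q = m2 a b c d" by (rule obtain_m2)
  obtain x y z w where R: "R = m2 x y z w" by (rule obtain_m2)
  have tq: "d = -a" using sq_trace0[OF assms(1,2)] unfolding Q by simp
  have tr: "w = -x" using sq_trace0[OF assms(3,4)] unfolding R by simp
  have hQ: "a*a + b*c = -1" using assms(1) unfolding Q tq by simp
  have hR: "x*x + y*z = -1" using assms(3) unfolding R tr by simp
  have T: "trace (Q ** R) = 2*a*x + b*z + c*y" unfolding Q R tq tr by simp
  show ?thesis unfolding T using L1_core[OF hQ hR] unfolding Q R tq tr by auto
qed

lemma sq_orb: assumes "det (Q::mat2) = 1" "psl_eq (Q ** Q) (mat 1)" "\<not> psl_eq Q (mat 1)"
  shows "Q ** Q = - mat 1"
proof -
  obtain a b c d where Q: "Q = m2 a b c d" by (rule obtain_m2)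
  have dt: "a*d - b*c = 1" using assms(1) unfolding Q by simp
  have nI: "\<not> (a = 1 \<and> b = 0 \<and> c = 0 \<and> d = 1)" "\<not> (a = -1 \<and> b = 0 \<and> c = 0 \<and> d = -1)"
    using assms(3) unfolding Q psl_eq_def m2_one by auto
  have "Q ** Q \<noteq> mat 1"
  proof
    assume "Q ** Q = mat 1"
    then have e: "a*a+b*c = 1" "a*b+b*d = 0" "c*a+d*c = 0" "c*b+d*d = 1"
      unfolding Q m2_one by simp_all
    show False
    proof (cases "a + d = 0")
      case True
      then have "d = -a" by simp
      then show False using e(1) dt by simp
    next
      case False
      have "b*(a+d) = 0" using e(2) by (simp add: algebra_simps)
      then have b: "b = 0" using False by simp
      have "c*(a+d) = 0" using e(3) by (simp add: algebra_simps)
      then have c: "c = 0" using False by simp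
      have aa: "a*a = 1" and ad: "a*d = 1" using e(1) e(4) dt b c by simp_all
      have "a = 1 \<or> a = -1" using square_eq_iff[of a 1] aa by simp
      then have "(a = 1 \<and> d = 1) \<or> (a = -1 \<and> d = -1)"
      proof
        assume "a = 1" then show ?thesis using ad by simp
      next
        assume "a = -1" then have "d = -1" using ad by simp
        then show ?thesis using \<open>a = -1\<close> by simp
      qed
      then show False using nI b c by auto
    qed
  qed
  then show ?thesis using assms(2) unfolding psl_eq_def by simp
qed

lemma negI_ne: "(- mat 1 :: mat2) \<noteq> mat 1"
  by (simp add: m2_one)

lemma inv_poly: assumes "det (A::mat2) = 1" "det (\<alpha> *\<^sub>R mat 1 + \<beta> *\<^sub>R A) = 1"
  shows "matrix_inv (\<alpha> *\<^sub>R mat 1 + \<beta> *\<^sub>R A) = \<alpha> *\<^sub>R mat 1 + \<beta> *\<^sub>R matrix_inv A"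
proof -
  obtain a b c d where A: "A = m2 a b c d" by (rule obtain_m2)
  have d1: "a*d - b*c = 1" using assms(1) unfolding A by simp
  have M: "\<alpha> *\<^sub>R mat 1 + \<beta> *\<^sub>R A = m2 (\<alpha>+\<beta>*a) (\<beta>*b) (\<beta>*c) (\<alpha>+\<beta>*d)"
    unfolding A m2_one by simp
  have d2: "(\<alpha>+\<beta>*a)*(\<alpha>+\<beta>*d) - (\<beta>*b)*(\<beta>*c) = 1" using assms(2) unfolding M by simp
  show ?thesis unfolding M m2_inv1[OF d2] unfolding A m2_inv1[OF d1] m2_one by simp
qed

lemma comm_poly: assumes "(X::mat2) ** A = A ** X"
  shows "X ** (\<alpha> *\<^sub>R mat 1 + \<beta> *\<^sub>R A) = (\<alpha> *\<^sub>R mat 1 + \<beta> *\<^sub>R A) ** X"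
  by (simp add: add_l2 add_r2 assms)

lemma anti_poly: assumes "det (A::mat2) = 1" "det (\<alpha> *\<^sub>R mat 1 + \<beta> *\<^sub>R A) = 1"
  "(Y::mat2) ** A = matrix_inv A ** Y"
  shows "Y ** (\<alpha> *\<^sub>R mat 1 + \<beta> *\<^sub>R A) = matrix_inv (\<alpha> *\<^sub>R mat 1 + \<beta> *\<^sub>R A) ** Y"
  unfolding inv_poly[OF assms(1,2)] by (simp add: add_l2 add_r2 assms(3))

lemma eig_P:
  fixes a b c d lam mu :: real
  assumes dt: "a*d - b*c = 1" and tr: "a + d = lam + mu" and pr: "lam*mu = 1" and ne: "lam \<noteq> mu"
  shows "\<exists>P. det P \<noteq> 0 \<and> m2 a b c d ** P = P ** m2 lam 0 0 mu"
proof (cases "b = 0")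
  case False
  have l2: "lam*lam = (a+d)*lam - 1" using tr pr by (simp add: algebra_simps)
  have m2': "mu*mu = (a+d)*mu - 1" using tr pr by (simp add: algebra_simps)
  have "det (m2 b b (lam-a) (mu-a)) = b*(mu-lam)" by (simp add: algebra_simps)
  moreover have "b*(mu-lam) \<noteq> 0" using False ne by simp
  moreover have "m2 a b c d ** m2 b b (lam-a) (mu-a) = m2 b b (lam-a) (mu-a) ** m2 lam 0 0 mu"
  proof -
    have "c*b + d*(lam-a) = (lam-a)*lam"
      using l2 dt by (simp add: algebra_simps)
    moreover have "c*b + d*(mu-a) = (mu-a)*mu"
      using m2' dt by (simp add: algebra_simps)
    ultimately show ?thesis by (simp add: algebra_simps)
  qed
  ultimately show ?thesis by metis
next
  case True
  have ad: "a*d = 1" using dt True by simp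
  have "(a-lam)*(a-mu) = 0"
  proof -
    have "(a-lam)*(a-mu) = a*a - (lam+mu)*a + lam*mu" by (simp add: algebra_simps)
    also have "\<dots> = a*a - (a+d)*a + a*d" using tr pr ad by simp
    also have "\<dots> = 0" by (simp add: algebra_simps)
    finally show ?thesis .
  qed
  then have "a = lam \<or> a = mu" by simp
  then show ?thesis
  proof
    assume al: "a = lam"
    then have dm: "d = mu" using tr by simp
    have "det (m2 (a-d) 0 c 1) \<noteq> 0" using al dm ne by simp
    moreover have "m2 a b c d ** m2 (a-d) 0 c 1 = m2 (a-d) 0 c 1 ** m2 lam 0 0 mu"
      using al dm True by (simp add: algebra_simps)
    ultimately show ?thesis by metis
  next
    assume am: "a = mu"
    then have dl: "d = lam" using tr by simp
    have "det (m2 0 (a-d) 1 c) \<noteq> 0" using am dl ne by simp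
    moreover have "m2 a b c d ** m2 0 (a-d) 1 c = m2 0 (a-d) 1 c ** m2 lam 0 0 mu"
      using am dl True by (simp add: algebra_simps)
    ultimately show ?thesis by metis
  qed
qed

lemma conj_diag:
  assumes "det (P::mat2) \<noteq> 0" "A ** P = P ** D"
  shows "P ** D ** matrix_inv P = A"
proof -
  have "P ** D ** matrix_inv P = A ** P ** matrix_inv P" using assms(2) by simp
  also have "\<dots> = A ** (P ** matrix_inv P)" by (simp add: matrix_mul_assoc)
  also have "\<dots> = A" using inv_det_nz(1)[OF assms(1)] by simp
  finally show ?thesis .
qed

lemma one_par_poly:
  assumes dA: "det A = 1" and hA: "2 < \<bar>trace A\<bar>"
  shows "\<exists>\<alpha> \<beta>. one_par A t = \<alpha> *\<^sub>R mat 1 + \<beta> *\<^sub>R A \<and> det (one_par A t) = 1"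
proof -
  define \<tau> where "\<tau> = \<bar>trace A\<bar>"
  define s :: real where "s = (if 0 \<le> trace A then 1 else -1)"
  have ss: "s * s = 1" unfolding s_def by simp
  define A' where "A' = s *\<^sub>R A"
  have trA': "trace A' = \<tau>" unfolding A'_def \<tau>_def s_def by simp
  have dA': "det A' = 1" unfolding A'_def using det_smul_sign[OF ss] dA by simp
  have pslA': "psl_eq A' A" unfolding A'_def psl_eq_def s_def by simp
  define lam where "lam = exp (transl_len A / 2)"
  define mu where "mu = exp (- transl_len A / 2)"
  have l2: "transl_len A / 2 = arcosh (\<tau>/2)" unfolding transl_len_def \<tau>_def by simp
  have t1: "\<tau>/2 \<ge> 1" using hA unfolding \<tau>_def by simp
  have pr: "lam*mu = 1" unfolding lam_def mu_def by (simp add: exp_minus)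
  have sm: "lam + mu = \<tau>"
  proof -
    have "mu = exp (- (transl_len A / 2))" unfolding mu_def by simp
    then have "lam + mu = 2 * cosh (arcosh (\<tau>/2))"
      unfolding lam_def l2 cosh_field_def by simp
    also have "\<dots> = \<tau>" using cosh_arcosh_real[OF t1] by simp
    finally show ?thesis .
  qed
  have ne: "lam \<noteq> mu"
  proof
    assume "lam = mu"
    then have "transl_len A / 2 = - transl_len A / 2" unfolding lam_def mu_def by simp
    then have "arcosh (\<tau>/2) = 0" using l2 by simp
    then have "\<tau>/2 = 1" using arcosh_eq_0_iff_real[OF t1] by simp
    then show False using hA unfolding \<tau>_def by simp
  qed
  obtain a b c d where A'm: "A' = m2 a b c d" by (rule obtain_m2)
  have dt: "a*d - b*c = 1" using dA' unfolding A'm by simp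
  have tr: "a + d = lam + mu" using trA' sm unfolding A'm by simp
  obtain P where P: "det P \<noteq> 0" "A' ** P = P ** m2 lam 0 0 mu"
    using eig_P[OF dt tr pr ne] unfolding A'm[symmetric] by blast
  have "P ** diag2 lam mu ** matrix_inv P = A'"
    using conj_diag[OF P] unfolding diag2_m2 .
  then have ex: "\<exists>M P. invertible P \<and>
      psl_eq (P ** diag2 (exp (transl_len A / 2)) (exp (- transl_len A / 2)) ** matrix_inv P) A \<and>
      M = P ** diag2 (exp (t / 2)) (exp (- t / 2)) ** matrix_inv P"
    using P(1) pslA' invertible_det_nz unfolding lam_def mu_def by blast
  obtain P2 where P2: "invertible P2"
      "psl_eq (P2 ** diag2 lam mu ** matrix_inv P2) A"
      "one_par A t = P2 ** diag2 (exp (t / 2)) (exp (- t / 2)) ** matrix_inv P2"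
    using someI_ex[OF ex] unfolding one_par_def[symmetric] lam_def mu_def by blast
  have dP2: "det P2 \<noteq> 0" using P2(1) invertible_det_nz by blast
  obtain e where e: "P2 ** diag2 lam mu ** matrix_inv P2 = e *\<^sub>R A"
    using P2(2) unfolding psl_eq_def by (metis scaleR_minus1_left scaleR_one)
  define \<beta> where "\<beta> = (exp (t/2) - exp (- t/2)) / (lam - mu)"
  define \<alpha> where "\<alpha> = exp (t/2) - \<beta> * lam"
  have Dt: "diag2 (exp (t / 2)) (exp (- t / 2)) = \<alpha> *\<^sub>R mat 1 + \<beta> *\<^sub>R diag2 lam mu"
  proof -
    have bb: "\<beta> * (lam - mu) = exp (t/2) - exp (- t/2)" unfolding \<beta>_def using ne by simp
    have "exp (- t/2) = \<alpha> + \<beta> * mu"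
      unfolding \<alpha>_def using bb by (smt (verit) right_diff_distrib)
    then show ?thesis unfolding diag2_m2 m2_one \<alpha>_def by simp
  qed
  have "one_par A t = \<alpha> *\<^sub>R (P2 ** matrix_inv P2) + \<beta> *\<^sub>R (P2 ** diag2 lam mu ** matrix_inv P2)"
    unfolding P2(3) Dt by (simp add: add_l2 add_r2 matrix_mul_assoc)
  also have "\<dots> = \<alpha> *\<^sub>R mat 1 + (\<beta> * e) *\<^sub>R A"
    unfolding e inv_det_nz(1)[OF dP2] by simp
  finally have OP: "one_par A t = \<alpha> *\<^sub>R mat 1 + (\<beta> * e) *\<^sub>R A" .
  have "det (one_par A t) = det P2 * det (diag2 (exp (t / 2)) (exp (- t / 2))) * det (matrix_inv P2)"
    unfolding P2(3) by (simp add: det_mul)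
  also have "det (diag2 (exp (t / 2)) (exp (- t / 2))) = 1"
    unfolding diag2_m2 by (simp add: exp_minus)
  also have "det P2 * 1 * det (matrix_inv P2) = det (P2 ** matrix_inv P2)" by (simp add: det_mul)
  also have "\<dots> = 1" unfolding inv_det_nz(1)[OF dP2] by simp
  finally have "det (one_par A t) = 1" .
  then show ?thesis using OP by blast
qed

definition good :: "(nat \<Rightarrow> mat2) \<Rightarrow> bool" where
  "good Q \<longleftrightarrow> (\<forall>i\<in>{1,2,3,4,6::nat}. det (Q i) = 1 \<and> Q i ** Q i = - mat 1) \<and> Q 5 = mat 1 \<and>
     psl_eq (Q 1 ** Q 2 ** Q 3 ** Q 4 ** Q 6) (mat 1)"

lemma rassoc: "(X::mat2) ** Y = Z \<Longrightarrow> X ** (Y ** W) = Z ** W"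
  by (simp add: matrix_mul_assoc)

lemma sq_r: "(X::mat2) ** X = - mat 1 \<Longrightarrow> X ** (X ** W) = - W"
  by (drule rassoc[of X X _ W]) simp

lemmas ra = matrix_mul_assoc[symmetric]

lemma inv_mat1: "matrix_inv (mat 1 :: mat2) = mat 1"
  by (rule inv_unique2) simp_all

lemma psl_mat1_sq: "Q ** Q = - mat 1 \<Longrightarrow> \<not> psl_eq (Q::mat2) (mat 1)"
  unfolding psl_eq_def using negI_ne by auto

lemma nat16: "(i::nat) \<in> {1..6} \<longleftrightarrow> i = 1 \<or> i = 2 \<or> i = 3 \<or> i = 4 \<or> i = 5 \<or> i = 6"
  by auto

lemma sgn1_sq: "sgn1 e \<Longrightarrow> e * e = 1"
  unfolding sgn1_def by auto

lemma sgn1_ne0: "sgn1 e \<Longrightarrow> e \<noteq> 0"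
  unfolding sgn1_def by auto

lemma psl_scale: "sgn1 e \<Longrightarrow> psl_eq (e *\<^sub>R A) A"
  unfolding sgn1_def psl_eq_def by auto

lemma psl_sym: "psl_eq A B \<Longrightarrow> psl_eq B A"
  unfolding psl_eq_def by auto

lemma psl_trans: "psl_eq A B \<Longrightarrow> psl_eq B C \<Longrightarrow> psl_eq A C"
  unfolding psl_eq_def by auto

lemma psl_mult: "psl_eq (A::mat2) A' \<Longrightarrow> psl_eq B B' \<Longrightarrow> psl_eq (A ** B) (A' ** B')"
  unfolding psl_eq_def by auto

lemma psl_refl: "psl_eq A A"
  unfolding psl_eq_def by auto

lemma P5_intro:
  assumes S: "surface_rep \<rho>" and G: "good Q" and R: "\<forall>g. psl_eq (restrict_rep Q g) (\<rho> g)"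
  shows "in_P5 \<rho>"
proof -
  have Gi: "\<And>i. i \<in> {1,2,3,4,6} \<Longrightarrow> det (Q i) = 1 \<and> Q i ** Q i = - mat 1"
    using G unfolding good_def by blast
  have Q5: "Q 5 = mat 1" using G unfolding good_def by blast
  have pr: "psl_eq (Q 1 ** Q 2 ** Q 3 ** Q 4 ** Q 6) (mat 1)" using G unfolding good_def by blast
  have orb: "orbifold_rep Q"
    unfolding orbifold_rep_def
  proof
    show "\<forall>i\<in>{1..6}. det (Q i) = 1 \<and> psl_eq (Q i ** Q i) (mat 1)"
    proof
      fix i :: nat assume "i \<in> {1..6}"
      then have "i \<in> {1,2,3,4,6} \<or> i = 5" by auto
      then show "det (Q i) = 1 \<and> psl_eq (Q i ** Q i) (mat 1)"
      proof
        assume "i \<in> {1,2,3,4,6}"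
        then show ?thesis using Gi[of i] unfolding psl_eq_def by simp
      next
        assume "i = 5" then show ?thesis using Q5 psl_refl by simp
      qed
    qed
    show "psl_eq (Q 1 ** Q 2 ** Q 3 ** Q 4 ** Q 5 ** Q 6) (mat 1)"
      using pr Q5 by simp
  qed
  have nt: "\<forall>i\<in>{1..6}. i \<noteq> 5 \<longrightarrow> \<not> psl_eq (Q i) (mat 1)"
  proof (intro ballI impI)
    fix i :: nat assume "i \<in> {1..6}" "i \<noteq> 5"
    then have "i \<in> {1,2,3,4,6}" by auto
    then show "\<not> psl_eq (Q i) (mat 1)" using Gi[of i] psl_mat1_sq by blast
  qed
  have cj: "conj_equiv (restrict_rep Q) \<rho>"
    unfolding conj_equiv_def
    by (rule exI[of _ "mat 1"]) (simp add: inv_mat1 R)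
  show ?thesis unfolding in_P5_def using S orb Q5 psl_refl nt cj by auto
qed


definition cj :: "mat2 \<Rightarrow> mat2 \<Rightarrow> mat2" where "cj C X = C ** X ** matrix_inv C"

lemma cj_mult: assumes "det C = 1" shows "cj C X ** cj C Y = cj C (X ** Y)"
proof -
  have h: "\<And>W. matrix_inv C ** (C ** W) = W" using rassoc[OF inv1(2)[OF assms]] by simp
  show ?thesis unfolding cj_def by (simp add: ra h)
qed

lemma cj_det: "det C = 1 \<Longrightarrow> det (cj C X) = det X"
  unfolding cj_def by (simp add: det_mul det_inv1)

lemma cj_smul: "cj C (e *\<^sub>R X) = e *\<^sub>R cj C X"
  unfolding cj_def by simp

lemma cj_one: "det C = 1 \<Longrightarrow> cj C (mat 1) = mat 1"
  unfolding cj_def using inv1[of C] by simp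

lemma cj_neg: "cj C (- X) = - cj C X"
  unfolding cj_def by simp

lemma cj_psl: "det C = 1 \<Longrightarrow> psl_eq X (mat 1) \<Longrightarrow> psl_eq (cj C X) (mat 1)"
  unfolding psl_eq_def using cj_one cj_neg by auto

lemma P5_normal:
  assumes "in_P5 \<rho>"
  shows "\<exists>Q. good Q \<and> (\<forall>g. psl_eq (restrict_rep Q g) (\<rho> g))"
proof -
  obtain Q C where orb: "orbifold_rep Q" and Q5: "psl_eq (Q 5) (mat 1)"
    and nt: "\<forall>i\<in>{1..6}. i \<noteq> 5 \<longrightarrow> \<not> psl_eq (Q i) (mat 1)"
    and dC: "det C = 1" and R: "\<forall>g. psl_eq (C ** restrict_rep Q g ** matrix_inv C) (\<rho> g)"
    using assms unfolding in_P5_def conj_equiv_def by blast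
  have Qi: "\<And>i. i \<in> {1,2,3,4,6} \<Longrightarrow> det (Q i) = 1 \<and> Q i ** Q i = - mat 1"
  proof -
    fix i :: nat assume i: "i \<in> {1,2,3,4,6}"
    then have i6: "i \<in> {1..6}" "i \<noteq> 5" by auto
    have "det (Q i) = 1" "psl_eq (Q i ** Q i) (mat 1)" using orb i6(1) unfolding orbifold_rep_def by auto
    then show "det (Q i) = 1 \<and> Q i ** Q i = - mat 1" using sq_orb nt i6 by blast
  qed
  obtain e5 where e5: "Q 5 = e5 *\<^sub>R mat 1" "sgn1 e5" using Q5 unfolding psl_eq_iff by blast
  have pr6: "psl_eq (Q 1 ** Q 2 ** Q 3 ** Q 4 ** Q 5 ** Q 6) (mat 1)"
    using orb unfolding orbifold_rep_def by blast
  have pr5: "psl_eq (Q 1 ** Q 2 ** Q 3 ** Q 4 ** Q 6) (mat 1)"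
  proof -
    have "Q 1 ** Q 2 ** Q 3 ** Q 4 ** Q 5 ** Q 6 = e5 *\<^sub>R (Q 1 ** Q 2 ** Q 3 ** Q 4 ** Q 6)"
      unfolding e5(1) by simp
    then show ?thesis using pr6 psl_scale[OF e5(2)] psl_trans psl_sym by metis
  qed
  define Q' where "Q' i = (if i = 5 then mat 1 else cj C (Q i))" for i
  have good: "good Q'"
    unfolding good_def
  proof (intro conjI)
    show "\<forall>i\<in>{1, 2, 3, 4, 6}. det (Q' i) = 1 \<and> Q' i ** Q' i = - mat 1"
    proof
      fix i :: nat assume i: "i \<in> {1,2,3,4,6}"
      then have "i \<noteq> 5" by auto
      then have Q'i: "Q' i = cj C (Q i)" unfolding Q'_def by simp
      show "det (Q' i) = 1 \<and> Q' i ** Q' i = - mat 1"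
        unfolding Q'i cj_mult[OF dC] cj_det[OF dC] using Qi[OF i] cj_neg cj_one[OF dC] by simp
    qed
    show "Q' 5 = mat 1" unfolding Q'_def by simp
    show "psl_eq (Q' 1 ** Q' 2 ** Q' 3 ** Q' 4 ** Q' 6) (mat 1)"
      unfolding Q'_def using cj_psl[OF dC pr5] by (simp add: cj_mult[OF dC])
  qed
  have RR: "\<forall>g. psl_eq (restrict_rep Q' g) (\<rho> g)"
  proof
    fix g show "psl_eq (restrict_rep Q' g) (\<rho> g)"
    proof (cases g)
      case a1 then show ?thesis using R[rule_format, of a1]
        unfolding Q'_def restrict_rep_def cj_def[symmetric] by (simp add: cj_mult[OF dC])
    next
      case b1 then show ?thesis using R[rule_format, of b1]
        unfolding Q'_def restrict_rep_def cj_def[symmetric] by (simp add: cj_mult[OF dC])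
    next
      case a2
      have "cj C (Q 6 ** Q 5) = e5 *\<^sub>R cj C (Q 6)" unfolding e5(1) by (simp add: cj_smul)
      then have "psl_eq (cj C (Q 6)) (cj C (Q 6 ** Q 5))" using psl_scale[OF e5(2)] psl_sym by metis
      then show ?thesis using R[rule_format, of a2] a2 psl_trans
        unfolding Q'_def restrict_rep_def cj_def[symmetric] by auto
    next
      case b2
      have "cj C (Q 4 ** Q 5) = e5 *\<^sub>R cj C (Q 4)" unfolding e5(1) by (simp add: cj_smul)
      then have "psl_eq (cj C (Q 4)) (cj C (Q 4 ** Q 5))" using psl_scale[OF e5(2)] psl_sym by metis
      then show ?thesis using R[rule_format, of b2] b2 psl_trans
        unfolding Q'_def restrict_rep_def cj_def[symmetric] by auto
    qed
  qed
  show ?thesis using good RR by blast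
qed

lemma good_facts:
  assumes "good Q"
  shows "det (Q 1) = 1" "det (Q 2) = 1" "det (Q 3) = 1" "det (Q 4) = 1" "det (Q 6) = 1"
    "Q 1 ** Q 1 = - mat 1" "Q 2 ** Q 2 = - mat 1" "Q 3 ** Q 3 = - mat 1" "Q 4 ** Q 4 = - mat 1"
    "Q 6 ** Q 6 = - mat 1" "Q 5 = mat 1" "psl_eq (Q 1 ** Q 2 ** Q 3 ** Q 4 ** Q 6) (mat 1)"
  using assms unfolding good_def by auto

lemma sgn_of_pm: "R = Q \<or> R = - Q \<Longrightarrow> \<exists>\<sigma>. sgn1 \<sigma> \<and> R = \<sigma> *\<^sub>R (Q::mat2)"
  unfolding sgn1_def by (metis scaleR_minus1_left scaleR_one)

lemma H_a: assumes G: "good Q" shows "2 < \<bar>trace (Q 3 ** Q 2)\<bar>"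
proof (rule ccontr)
  note F = good_facts[OF G]
  note S = sq_r[OF F(6)] sq_r[OF F(7)] sq_r[OF F(8)] sq_r[OF F(9)] sq_r[OF F(10)]
  assume "\<not> 2 < \<bar>trace (Q 3 ** Q 2)\<bar>"
  then have "\<bar>trace (Q 3 ** Q 2)\<bar> = 2" using half_turns[OF F(3) F(8) F(2) F(7)] by linarith
  then obtain \<sigma> where \<sigma>: "sgn1 \<sigma>" "Q 2 = \<sigma> *\<^sub>R Q 3"
    using half_turns[OF F(3) F(8) F(2) F(7)] sgn_of_pm by blast
  obtain e where e: "sgn1 e" "Q 1 ** Q 2 ** Q 3 ** Q 4 ** Q 6 = e *\<^sub>R mat 1"
    using F(12) unfolding psl_eq_iff by blast
  have L: "(Q 1 ** Q 2 ** Q 3 ** Q 4 ** Q 6) ** (Q 6 ** Q 4) = - (\<sigma> *\<^sub>R Q 1)"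
    unfolding \<sigma>(2) by (simp add: ra S F)
  then have "e *\<^sub>R (Q 6 ** Q 4) = - (\<sigma> *\<^sub>R Q 1)" unfolding e(2) by simp
  then have "trace (e *\<^sub>R (Q 6 ** Q 4)) = trace (- (\<sigma> *\<^sub>R Q 1))" by simp
  then have "e * trace (Q 6 ** Q 4) = 0" using sq_trace0[OF F(1) F(6)] by simp
  then have "trace (Q 6 ** Q 4) = 0" using sgn1_ne0[OF e(1)] by simp
  then show False using half_turns[OF F(5) F(10) F(4) F(9)] by simp
qed

lemma H_c: assumes G: "good Q" shows "2 < \<bar>trace (Q 4 ** Q 6)\<bar>"
proof (rule ccontr)
  note F = good_facts[OF G]
  note S = sq_r[OF F(6)] sq_r[OF F(7)] sq_r[OF F(8)] sq_r[OF F(9)] sq_r[OF F(10)]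
  assume "\<not> 2 < \<bar>trace (Q 4 ** Q 6)\<bar>"
  then have "\<bar>trace (Q 4 ** Q 6)\<bar> = 2" using half_turns[OF F(4) F(9) F(5) F(10)] by linarith
  then obtain \<sigma> where \<sigma>: "sgn1 \<sigma>" "Q 6 = \<sigma> *\<^sub>R Q 4"
    using half_turns[OF F(4) F(9) F(5) F(10)] sgn_of_pm by blast
  obtain e where e: "sgn1 e" "Q 1 ** Q 2 ** Q 3 ** Q 4 ** Q 6 = e *\<^sub>R mat 1"
    using F(12) unfolding psl_eq_iff by blast
  have L: "(Q 1 ** Q 2 ** Q 3 ** Q 4 ** Q 6) ** (Q 3 ** Q 2) = - (\<sigma> *\<^sub>R Q 1)"
    unfolding \<sigma>(2) by (simp add: ra S F)
  then have "e *\<^sub>R (Q 3 ** Q 2) = - (\<sigma> *\<^sub>R Q 1)" unfolding e(2) by simp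
  then have "trace (e *\<^sub>R (Q 3 ** Q 2)) = trace (- (\<sigma> *\<^sub>R Q 1))" by simp
  then have "e * trace (Q 3 ** Q 2) = 0" using sq_trace0[OF F(1) F(6)] by simp
  then have "trace (Q 3 ** Q 2) = 0" using sgn1_ne0[OF e(1)] by simp
  then show False using half_turns[OF F(3) F(8) F(2) F(7)] by simp
qed

lemma trace_sq: assumes "det (W::mat2) = 1" shows "trace (W ** W) = (trace W)^2 - 2"
proof -
  obtain a b c d where W: "W = m2 a b c d" by (rule obtain_m2)
  have "a*d - b*c = 1" using assms unfolding W by simp
  then show ?thesis unfolding W by (simp add: power2_eq_square algebra_simps)
qed

lemma flow_a1_ok:
  assumes S: "surface_rep \<rho>" and G: "good Q" and R: "\<forall>g. psl_eq (restrict_rep Q g) (\<rho> g)"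
  shows "in_P5 (flow_a1 t \<rho>)"
proof -
  note F = good_facts[OF G]
  note Sq = sq_r[OF F(6)] sq_r[OF F(7)] sq_r[OF F(8)] sq_r[OF F(9)] sq_r[OF F(10)]
  have dets: "\<And>g. det (\<rho> g) = 1" using S unfolding surface_rep_def by blast
  have dA: "det (\<rho> a1) = 1" by (rule dets)
  obtain e1 where e1: "sgn1 e1" "Q 3 ** Q 2 = e1 *\<^sub>R \<rho> a1"
    using R[rule_format, of a1] unfolding restrict_rep_def psl_eq_iff by auto
  have ee: "e1 * e1 = 1" using sgn1_sq[OF e1(1)] .
  have Aeq: "\<rho> a1 = e1 *\<^sub>R (Q 3 ** Q 2)" unfolding e1(2) using ee by simp
  have "\<bar>trace (\<rho> a1)\<bar> = \<bar>trace (Q 3 ** Q 2)\<bar>"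
    unfolding Aeq using e1(1) unfolding sgn1_def by auto
  then have trA: "2 < \<bar>trace (\<rho> a1)\<bar>" using H_a[OF G] by simp
  define M where "M = one_par (\<rho> a1) t"
  obtain \<alpha> \<beta> where Mab: "M = \<alpha> *\<^sub>R mat 1 + \<beta> *\<^sub>R \<rho> a1" and dM: "det M = 1"
    using one_par_poly[OF dA trA] unfolding M_def by blast
  define N where "N = matrix_inv M"
  have MN: "M ** N = mat 1" "N ** M = mat 1" unfolding N_def using inv1[OF dM] by auto
  have dN: "det N = 1" unfolding N_def using det_inv1[OF dM] .
  have invA: "matrix_inv (\<rho> a1) = e1 *\<^sub>R (Q 2 ** Q 3)"
    by (rule inv_unique2) (simp_all add: Aeq ra Sq F ee)
  have an2: "Q 2 ** \<rho> a1 = matrix_inv (\<rho> a1) ** Q 2"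
    unfolding invA by (simp add: Aeq ra Sq F)
  have an3: "Q 3 ** \<rho> a1 = matrix_inv (\<rho> a1) ** Q 3"
    unfolding invA by (simp add: Aeq ra Sq F)
  have NQ2: "N ** Q 2 = Q 2 ** M"
    using anti_poly[OF dA _ an2, of \<alpha> \<beta>] dM unfolding Mab[symmetric] N_def by simp
  have NQ3: "N ** Q 3 = Q 3 ** M"
    using anti_poly[OF dA _ an3, of \<alpha> \<beta>] dM unfolding Mab[symmetric] N_def by simp
  note NQ = rassoc[OF NQ2] rassoc[OF NQ3] rassoc[OF MN(1)] rassoc[OF MN(2)]
  define Q' where "Q' = Q(2 := Q 2 ** N, 3 := Q 3 ** N)"
  have Q'v: "Q' 1 = Q 1" "Q' 2 = Q 2 ** N" "Q' 3 = Q 3 ** N" "Q' 4 = Q 4" "Q' 5 = Q 5" "Q' 6 = Q 6"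
    unfolding Q'_def by simp_all
  have good: "good Q'"
    unfolding good_def
  proof (intro conjI)
    show "\<forall>i\<in>{1, 2, 3, 4, 6}. det (Q' i) = 1 \<and> Q' i ** Q' i = - mat 1"
    proof
      fix i :: nat assume "i \<in> {1,2,3,4,6}"
      then have "i = 1 \<or> i = 2 \<or> i = 3 \<or> i = 4 \<or> i = 6" by auto
      moreover have "det (Q' 1) = 1 \<and> Q' 1 ** Q' 1 = - mat 1" unfolding Q'v using F by simp
      moreover have "det (Q' 2) = 1 \<and> Q' 2 ** Q' 2 = - mat 1" unfolding Q'v using F dN by (simp add: ra NQ MN Sq det_mul)
      moreover have "det (Q' 3) = 1 \<and> Q' 3 ** Q' 3 = - mat 1" unfolding Q'v using F dN by (simp add: ra NQ MN Sq det_mul)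
      moreover have "det (Q' 4) = 1 \<and> Q' 4 ** Q' 4 = - mat 1" unfolding Q'v using F by simp
      moreover have "det (Q' 6) = 1 \<and> Q' 6 ** Q' 6 = - mat 1" unfolding Q'v using F by simp
      ultimately show "det (Q' i) = 1 \<and> Q' i ** Q' i = - mat 1" by blast
    qed
    show "Q' 5 = mat 1" unfolding Q'v using F by simp
    have "Q' 1 ** Q' 2 ** Q' 3 ** Q' 4 ** Q' 6 = Q 1 ** Q 2 ** Q 3 ** Q 4 ** Q 6"
      unfolding Q'v by (simp add: ra NQ MN)
    then show "psl_eq (Q' 1 ** Q' 2 ** Q' 3 ** Q' 4 ** Q' 6) (mat 1)" using F(12) by simp
  qed
  have fl: "flow_a1 t \<rho> = \<rho>(b1 := \<rho> b1 ** N)" unfolding flow_a1_def N_def M_def ..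
  have RR: "\<forall>g. psl_eq (restrict_rep Q' g) (flow_a1 t \<rho> g)"
  proof
    fix g show "psl_eq (restrict_rep Q' g) (flow_a1 t \<rho> g)"
    proof (cases g)
      case a1
      have "restrict_rep Q' a1 = restrict_rep Q a1" unfolding restrict_rep_def Q'v by (simp add: ra NQ MN)
      then show ?thesis using R a1 unfolding fl by simp
    next
      case b1
      obtain e2 where e2: "Q 1 ** Q 2 = e2 *\<^sub>R \<rho> b1" "sgn1 e2"
        using R[rule_format, of b1] unfolding restrict_rep_def psl_eq_iff by auto
      have "restrict_rep Q' b1 = e2 *\<^sub>R (\<rho> b1 ** N)"
        unfolding restrict_rep_def Q'v using rassoc[OF e2(1), of N] by (simp add: ra)
      then show ?thesis using b1 psl_scale[OF e2(2)] unfolding fl by simp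
    next
      case a2
      have "restrict_rep Q' a2 = restrict_rep Q a2" unfolding restrict_rep_def Q'v by simp
      then show ?thesis using R a2 unfolding fl by simp
    next
      case b2
      have "restrict_rep Q' b2 = restrict_rep Q b2" unfolding restrict_rep_def Q'v by simp
      then show ?thesis using R b2 unfolding fl by simp
    qed
  qed
  have SR: "surface_rep (flow_a1 t \<rho>)"
    unfolding surface_rep_def fl
  proof (intro conjI allI)
    fix g show "det ((\<rho>(b1 := \<rho> b1 ** N)) g) = 1"
      using dets dN by (cases g) (simp_all add: det_mul)
  next
    let ?A = "\<rho> a1" and ?B = "\<rho> b1"
    have iB: "matrix_inv (?B ** N) = M ** matrix_inv ?B"
      by (rule inv_unique2) (simp_all add: ra NQ rassoc[OF inv1(1)[OF dets]] rassoc[OF inv1(2)[OF dets]] inv1[OF dets] MN)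
    have AM: "?A ** M = M ** ?A" unfolding Mab by (rule comm_poly) simp
    have iAM: "matrix_inv ?A ** M = M ** matrix_inv ?A"
    proof -
      have "matrix_inv ?A ** M = matrix_inv ?A ** M ** (?A ** matrix_inv ?A)"
        using inv1(1)[OF dA] by simp
      also have "\<dots> = matrix_inv ?A ** (?A ** M) ** matrix_inv ?A" unfolding AM by (simp add: ra)
      also have "\<dots> = M ** matrix_inv ?A" by (simp add: ra rassoc[OF inv1(2)[OF dA]])
      finally show ?thesis .
    qed
    have "comm ?A (?B ** N) = comm ?A ?B"
      unfolding comm_def iB by (simp add: ra rassoc[OF iAM] NQ)
    then show "psl_eq (comm ((\<rho>(b1 := \<rho> b1 ** N)) a1) ((\<rho>(b1 := \<rho> b1 ** N)) b1) **
       comm ((\<rho>(b1 := \<rho> b1 ** N)) a2) ((\<rho>(b1 := \<rho> b1 ** N)) b2)) (mat 1)"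
      using S unfolding surface_rep_def by simp
  qed
  show ?thesis using P5_intro[OF SR good RR] .
qed

lemma inv_smul1: assumes "sgn1 e" "det (X::mat2) = 1"
  shows "matrix_inv (e *\<^sub>R X) = e *\<^sub>R matrix_inv X"
  by (rule inv_unique2) (use assms sgn1_sq[OF assms(1)] inv1[OF assms(2)] in simp_all)

lemma comm_sgn: assumes "sgn1 e" "sgn1 f" "det (X::mat2) = 1" "det Y = 1"
  shows "comm (e *\<^sub>R X) (f *\<^sub>R Y) = comm X Y"
  unfolding comm_def inv_smul1[OF assms(1,3)] inv_smul1[OF assms(2,4)]
  using assms(1,2) unfolding sgn1_def by auto

lemma comm_conj: assumes dZ: "det (Z::mat2) = 1" and dX: "det X = 1" and dY: "det Y = 1"
  shows "comm (Z ** X ** matrix_inv Z) (Z ** Y ** matrix_inv Z) = Z ** comm X Y ** matrix_inv Z"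
proof -
  note zi = inv1[OF dZ] rassoc[OF inv1(1)[OF dZ]] rassoc[OF inv1(2)[OF dZ]]
  have iv: "\<And>W. det W = 1 \<Longrightarrow> matrix_inv (Z ** W ** matrix_inv Z) = Z ** matrix_inv W ** matrix_inv Z"
  proof -
    fix W :: mat2 assume dW: "det W = 1"
    note wi = inv1[OF dW] rassoc[OF inv1(1)[OF dW]] rassoc[OF inv1(2)[OF dW]]
    show "matrix_inv (Z ** W ** matrix_inv Z) = Z ** matrix_inv W ** matrix_inv Z"
      by (rule inv_unique2) (simp_all add: ra zi wi)
  qed
  show ?thesis unfolding comm_def iv[OF dX] iv[OF dY] by (simp add: ra zi)
qed

lemma flow_comm_ok:
  assumes S: "surface_rep \<rho>" and G: "good Q" and R: "\<forall>g. psl_eq (restrict_rep Q g) (\<rho> g)"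
  shows "in_P5 (flow_comm t \<rho>)"
proof -
  note F = good_facts[OF G]
  note Sq = sq_r[OF F(6)] sq_r[OF F(7)] sq_r[OF F(8)] sq_r[OF F(9)] sq_r[OF F(10)]
  note Fs = F(6)[simplified] Sq(1)[simplified]
  have dets: "\<And>g. det (\<rho> g) = 1" using S unfolding surface_rep_def by blast
  obtain e1 where e1: "sgn1 e1" "Q 3 ** Q 2 = e1 *\<^sub>R \<rho> a1"
    using R[rule_format, of a1] unfolding restrict_rep_def psl_eq_iff by auto
  obtain e2 where e2: "sgn1 e2" "Q 1 ** Q 2 = e2 *\<^sub>R \<rho> b1"
    using R[rule_format, of b1] unfolding restrict_rep_def psl_eq_iff by auto
  have Aeq: "\<rho> a1 = e1 *\<^sub>R (Q 3 ** Q 2)" unfolding e1(2) using sgn1_sq[OF e1(1)] by simp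
  have Beq: "\<rho> b1 = e2 *\<^sub>R (Q 1 ** Q 2)" unfolding e2(2) using sgn1_sq[OF e2(1)] by simp
  have d32: "det (Q 3 ** Q 2) = 1" and d12: "det (Q 1 ** Q 2) = 1" using F by (simp_all add: det_mul)
  have i32: "matrix_inv (Q 3 ** Q 2) = Q 2 ** Q 3" by (rule inv_unique2) (simp_all add: ra Sq F Fs)
  have i12: "matrix_inv (Q 1 ** Q 2) = Q 2 ** Q 1" by (rule inv_unique2) (simp_all add: ra Sq F Fs)
  define K where "K = comm (\<rho> a1) (\<rho> b1)"
  define W where "W = Q 3 ** Q 2 ** Q 1"
  have Keq: "K = - (W ** W)"
    unfolding K_def Aeq Beq comm_sgn[OF e1(1) e2(1) d32 d12] W_def
    unfolding comm_def i32 i12 by (simp add: ra Sq F Fs)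
  obtain e where e: "sgn1 e" "Q 1 ** Q 2 ** Q 3 ** Q 4 ** Q 6 = e *\<^sub>R mat 1"
    using F(12) unfolding psl_eq_iff by blast
  have "W ** (Q 1 ** Q 2 ** Q 3 ** Q 4 ** Q 6) = - (Q 4 ** Q 6)"
    unfolding W_def by (simp add: ra Sq F Fs)
  then have Veq: "Q 4 ** Q 6 = - (e *\<^sub>R W)" unfolding e(2) by (metis minus_minus smul_r matrix_mul_rid)
  have KV: "(Q 4 ** Q 6) ** K = K ** (Q 4 ** Q 6)"
    unfolding Veq Keq by (simp add: ra)
  have dW: "det W = 1" unfolding W_def using F by (simp add: det_mul)
  have dK: "det K = 1" unfolding K_def comm_def using dets by (simp add: det_mul det_inv1)
  have "trace (Q 4 ** Q 6) = - (e * trace W)" unfolding Veq by simp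
  then have "\<bar>trace W\<bar> = \<bar>trace (Q 4 ** Q 6)\<bar>" using e(1) unfolding sgn1_def by auto
  then have tW: "2 < \<bar>trace W\<bar>" using H_c[OF G] by simp
  have "(2::real)^2 < \<bar>trace W\<bar>^2" by (rule power_strict_mono) (use tW in auto)
  then have "4 < (trace W)^2" by simp
  then have trK: "2 < \<bar>trace K\<bar>" unfolding Keq using trace_sq[OF dW] by simp
  define Z where "Z = one_par K t"
  obtain \<alpha> \<beta> where Zab: "Z = \<alpha> *\<^sub>R mat 1 + \<beta> *\<^sub>R K" and dZ: "det Z = 1"
    using one_par_poly[OF dK trK] unfolding Z_def by blast
  define Zi where "Zi = matrix_inv Z"
  have ZZ: "Z ** Zi = mat 1" "Zi ** Z = mat 1" unfolding Zi_def using inv1[OF dZ] by auto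
  note ZZr = rassoc[OF ZZ(1)] rassoc[OF ZZ(2)]
  have dZi: "det Zi = 1" unfolding Zi_def using det_inv1[OF dZ] .
  have ZV: "(Q 4 ** Q 6) ** Z = Z ** (Q 4 ** Q 6)" unfolding Zab by (rule comm_poly[OF KV])
  have ZVr: "Z ** (Q 4 ** (Q 6 ** X)) = Q 4 ** (Q 6 ** (Z ** X))" for X
  proof -
    have "Q 4 ** (Q 6 ** (Z ** X)) = Z ** (Q 4 ** (Q 6 ** X))" using rassoc[OF ZV, of X] by (simp add: ra)
    then show ?thesis by (rule sym)
  qed
  have ZK: "K ** Z = Z ** K" unfolding Zab by (rule comm_poly) simp
  define Q' where "Q' = Q(4 := Z ** Q 4 ** Zi, 6 := Z ** Q 6 ** Zi)"
  have Q'v: "Q' 1 = Q 1" "Q' 2 = Q 2" "Q' 3 = Q 3" "Q' 4 = Z ** Q 4 ** Zi" "Q' 5 = Q 5" "Q' 6 = Z ** Q 6 ** Zi"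
    unfolding Q'_def by simp_all
  have good: "good Q'"
    unfolding good_def
  proof (intro conjI)
    show "\<forall>i\<in>{1, 2, 3, 4, 6}. det (Q' i) = 1 \<and> Q' i ** Q' i = - mat 1"
    proof
      fix i :: nat assume "i \<in> {1,2,3,4,6}"
      then have "i = 1 \<or> i = 2 \<or> i = 3 \<or> i = 4 \<or> i = 6" by auto
      moreover have "det (Q' 1) = 1 \<and> Q' 1 ** Q' 1 = - mat 1" unfolding Q'v using F by simp
      moreover have "det (Q' 2) = 1 \<and> Q' 2 ** Q' 2 = - mat 1" unfolding Q'v using F by simp
      moreover have "det (Q' 3) = 1 \<and> Q' 3 ** Q' 3 = - mat 1" unfolding Q'v using F by simp
      moreover have "det (Q' 4) = 1 \<and> Q' 4 ** Q' 4 = - mat 1" unfolding Q'v using F dZ dZi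
        by (simp add: ra ZZ ZZr Sq det_mul)
      moreover have "det (Q' 6) = 1 \<and> Q' 6 ** Q' 6 = - mat 1" unfolding Q'v using F dZ dZi
        by (simp add: ra ZZ ZZr Sq det_mul)
      ultimately show "det (Q' i) = 1 \<and> Q' i ** Q' i = - mat 1" by blast
    qed
    show "Q' 5 = mat 1" unfolding Q'v using F by simp
    have "Q' 1 ** Q' 2 ** Q' 3 ** Q' 4 ** Q' 6 = Q 1 ** Q 2 ** Q 3 ** Q 4 ** Q 6"
      unfolding Q'v by (simp add: ra ZZ ZZr ZVr)
    then show "psl_eq (Q' 1 ** Q' 2 ** Q' 3 ** Q' 4 ** Q' 6) (mat 1)" using F(12) by simp
  qed
  have fl: "flow_comm t \<rho> = \<rho>(a2 := Z ** \<rho> a2 ** Zi, b2 := Z ** \<rho> b2 ** Zi)"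
    unfolding flow_comm_def Let_def Zi_def Z_def K_def ..
  obtain e3 where e3: "Q 6 ** Q 5 = e3 *\<^sub>R \<rho> a2" "sgn1 e3"
    using R[rule_format, of a2] unfolding restrict_rep_def psl_eq_iff by auto
  obtain e4 where e4: "Q 4 ** Q 5 = e4 *\<^sub>R \<rho> b2" "sgn1 e4"
    using R[rule_format, of b2] unfolding restrict_rep_def psl_eq_iff by auto
  have RR: "\<forall>g. psl_eq (restrict_rep Q' g) (flow_comm t \<rho> g)"
  proof
    fix g show "psl_eq (restrict_rep Q' g) (flow_comm t \<rho> g)"
    proof (cases g)
      case a1
      have "restrict_rep Q' a1 = restrict_rep Q a1" unfolding restrict_rep_def Q'v by simp
      then show ?thesis using R a1 unfolding fl by simp
    next
      case b1
      have "restrict_rep Q' b1 = restrict_rep Q b1" unfolding restrict_rep_def Q'v by simp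
      then show ?thesis using R b1 unfolding fl by simp
    next
      case a2
      have "Q 6 = e3 *\<^sub>R \<rho> a2" using e3(1) F(11) by simp
      then have "restrict_rep Q' a2 = e3 *\<^sub>R (Z ** \<rho> a2 ** Zi)" unfolding restrict_rep_def Q'v F(11) by simp
      then show ?thesis using a2 psl_scale[OF e3(2)] unfolding fl by simp
    next
      case b2
      have "Q 4 = e4 *\<^sub>R \<rho> b2" using e4(1) F(11) by simp
      then have "restrict_rep Q' b2 = e4 *\<^sub>R (Z ** \<rho> b2 ** Zi)" unfolding restrict_rep_def Q'v F(11) by simp
      then show ?thesis using b2 psl_scale[OF e4(2)] unfolding fl by simp
    qed
  qed
  have SR: "surface_rep (flow_comm t \<rho>)"
    unfolding surface_rep_def fl
  proof (intro conjI allI)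
    fix g show "det ((\<rho>(a2 := Z ** \<rho> a2 ** Zi, b2 := Z ** \<rho> b2 ** Zi)) g) = 1"
      using dets dZ dZi by (cases g) (simp_all add: det_mul)
  next
    obtain e' where e': "sgn1 e'" "comm (\<rho> a1) (\<rho> b1) ** comm (\<rho> a2) (\<rho> b2) = e' *\<^sub>R mat 1"
      using S unfolding surface_rep_def psl_eq_iff by blast
    have c2: "comm (Z ** \<rho> a2 ** Zi) (Z ** \<rho> b2 ** Zi) = Z ** comm (\<rho> a2) (\<rho> b2) ** Zi"
      unfolding Zi_def by (rule comm_conj[OF dZ dets dets])
    have "comm (\<rho> a1) (\<rho> b1) ** comm (Z ** \<rho> a2 ** Zi) (Z ** \<rho> b2 ** Zi) = e' *\<^sub>R mat 1"
    proof -
      have "comm (\<rho> a1) (\<rho> b1) ** comm (Z ** \<rho> a2 ** Zi) (Z ** \<rho> b2 ** Zi)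
          = (K ** Z) ** comm (\<rho> a2) (\<rho> b2) ** Zi" unfolding c2 K_def by (simp add: ra)
      also have "\<dots> = Z ** (K ** comm (\<rho> a2) (\<rho> b2)) ** Zi" unfolding ZK by (simp add: ra)
      also have "\<dots> = e' *\<^sub>R mat 1" unfolding K_def e'(2) using ZZ by simp
      finally show ?thesis .
    qed
    then show "psl_eq (comm ((\<rho>(a2 := Z ** \<rho> a2 ** Zi, b2 := Z ** \<rho> b2 ** Zi)) a1)
          ((\<rho>(a2 := Z ** \<rho> a2 ** Zi, b2 := Z ** \<rho> b2 ** Zi)) b1) **
         comm ((\<rho>(a2 := Z ** \<rho> a2 ** Zi, b2 := Z ** \<rho> b2 ** Zi)) a2)
          ((\<rho>(a2 := Z ** \<rho> a2 ** Zi, b2 := Z ** \<rho> b2 ** Zi)) b2)) (mat 1)"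
      using psl_scale[OF e'(1)] by simp
  qed
  show ?thesis using P5_intro[OF SR good RR] .
qed

theorem mainTheorem3:
  fixes \<rho> :: "gen \<Rightarrow> mat2" and t :: real
  assumes "in_P5 \<rho>"
  shows "in_P5 (flow_a1 t \<rho>) \<and> in_P5 (flow_comm t \<rho>)"
proof -
  obtain Q where G: "good Q" and R: "\<forall>g. psl_eq (restrict_rep Q g) (\<rho> g)"
    using P5_normal[OF assms] by blast
  have S: "surface_rep \<rho>" using assms unfolding in_P5_def by blast
  show ?thesis using flow_a1_ok[OF S G R] flow_comm_ok[OF S G R] by blast
qed

end
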